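(* If $S$ is a DRC-semigroup, then $$\mu_S=\{(a,b)\in S\times S:\Theta_a=\Theta_b\text{ and }\Delta_a=\Delta_b\}=\{(a,b)\in S\times S:\vartheta_a=\vartheta_b\text{ and }\vartheta'_a=\vartheta'_b\}.$$
   Context: A DRC-semigroup is $(S,\cdot,D,R)$, $(S,\cdot)$ a semigroup, $D,R:S\to S$ with, for all $a,b$: $D(a)a=a$, $aR(a)=a$; $D(ab)=D(aD(b))$, $R(ab)=R(R(a)b)$; $D(ab)=D(a)D(ab)D(a)$, $R(ab)=R(b)R(ab)R(b)$; $R(D(a))=D(a)$, $D(R(a))=R(a)$. Let $P=\{D(a):a\in S\}$ (projections), partially ordered by $p\le q\iff p=pq=qp$. For $a\in S$ define maps (written on the right): $\Theta_a,\Delta_a:P\to P$ by $p\Theta_a=R(pa)$, $p\Delta_a=D(ap)$; $\vartheta_a:\{p\in P:p\le D(a)\}\to P$, $p\vartheta_a=R(pa)$; $\vartheta'_a:\{p\in P:p\le R(a)\}\to P$, $p\vartheta'_a=D(ap)$. Equality of maps includes equality of domains. A congruence on $S$ is a semigroup congruence $\sigma$ with $a\,\sigma\,b\Rightarrow D(a)\,\sigma\,D(b)$ and $R(a)\,\sigma\,R(b)$; it is projection-separating if $p\,\sigma\,q\Rightarrow p=q$ for $p,q\in P$. $\mu_S$ is the maximum projection-separating congruence on $S$. *)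

theory Defs
  imports Main
begin

definition drc_semigroup :: "('a \<Rightarrow> 'a \<Rightarrow> 'a) \<Rightarrow> ('a \<Rightarrow> 'a) \<Rightarrow> ('a \<Rightarrow> 'a) \<Rightarrow> bool" where
  "drc_semigroup m D R \<longleftrightarrow>
     (\<forall>a b c. m (m a b) c = m a (m b c)) \<and>
     (\<forall>a. m (D a) a = a) \<and> (\<forall>a. m a (R a) = a) \<and>
     (\<forall>a b. D (m a b) = D (m a (D b))) \<and> (\<forall>a b. R (m a b) = R (m (R a) b)) \<and>
     (\<forall>a b. D (m a b) = m (m (D a) (D (m a b))) (D a)) \<and>
     (\<forall>a b. R (m a b) = m (m (R b) (R (m a b))) (R b)) \<and>
     (\<forall>a. R (D a) = D a) \<and> (\<forall>a. D (R a) = R a)"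

definition projections :: "('a \<Rightarrow> 'a) \<Rightarrow> 'a set" where
  "projections D = range D"

definition proj_le :: "('a \<Rightarrow> 'a \<Rightarrow> 'a) \<Rightarrow> 'a \<Rightarrow> 'a \<Rightarrow> bool" where
  "proj_le m p q \<longleftrightarrow> p = m p q \<and> p = m q p"

text \<open>Partial maps P \<rightharpoonup> P (None = outside the domain), so that equality of maps
  includes equality of domains.\<close>
definition Theta_map :: "('a \<Rightarrow> 'a \<Rightarrow> 'a) \<Rightarrow> ('a \<Rightarrow> 'a) \<Rightarrow> ('a \<Rightarrow> 'a) \<Rightarrow> 'a \<Rightarrow> 'a \<Rightarrow> 'a option" where
  "Theta_map m D R a = (\<lambda>p. if p \<in> projections D then Some (R (m p a)) else None)"

definition Delta_map :: "('a \<Rightarrow> 'a \<Rightarrow> 'a) \<Rightarrow> ('a \<Rightarrow> 'a) \<Rightarrow> ('a \<Rightarrow> 'a) \<Rightarrow> 'a \<Rightarrow> 'a \<Rightarrow> 'a option" where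
  "Delta_map m D R a = (\<lambda>p. if p \<in> projections D then Some (D (m a p)) else None)"

definition vtheta_map :: "('a \<Rightarrow> 'a \<Rightarrow> 'a) \<Rightarrow> ('a \<Rightarrow> 'a) \<Rightarrow> ('a \<Rightarrow> 'a) \<Rightarrow> 'a \<Rightarrow> 'a \<Rightarrow> 'a option" where
  "vtheta_map m D R a = (\<lambda>p. if p \<in> projections D \<and> proj_le m p (D a) then Some (R (m p a)) else None)"

definition vtheta'_map :: "('a \<Rightarrow> 'a \<Rightarrow> 'a) \<Rightarrow> ('a \<Rightarrow> 'a) \<Rightarrow> ('a \<Rightarrow> 'a) \<Rightarrow> 'a \<Rightarrow> 'a \<Rightarrow> 'a option" where
  "vtheta'_map m D R a = (\<lambda>p. if p \<in> projections D \<and> proj_le m p (R a) then Some (D (m a p)) else None)"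

definition drc_congruence :: "('a \<Rightarrow> 'a \<Rightarrow> 'a) \<Rightarrow> ('a \<Rightarrow> 'a) \<Rightarrow> ('a \<Rightarrow> 'a) \<Rightarrow> ('a \<times> 'a) set \<Rightarrow> bool" where
  "drc_congruence m D R \<sigma> \<longleftrightarrow>
     equiv UNIV \<sigma> \<and>
     (\<forall>a b c. (a, b) \<in> \<sigma> \<longrightarrow> (m c a, m c b) \<in> \<sigma> \<and> (m a c, m b c) \<in> \<sigma>) \<and>
     (\<forall>a b. (a, b) \<in> \<sigma> \<longrightarrow> (D a, D b) \<in> \<sigma> \<and> (R a, R b) \<in> \<sigma>)"

definition projection_separating :: "('a \<Rightarrow> 'a) \<Rightarrow> ('a \<times> 'a) set \<Rightarrow> bool" where
  "projection_separating D \<sigma> \<longleftrightarrow>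
     (\<forall>p\<in>projections D. \<forall>q\<in>projections D. (p, q) \<in> \<sigma> \<longrightarrow> p = q)"

definition mu :: "('a \<Rightarrow> 'a \<Rightarrow> 'a) \<Rightarrow> ('a \<Rightarrow> 'a) \<Rightarrow> ('a \<Rightarrow> 'a) \<Rightarrow> ('a \<times> 'a) set" where
  "mu m D R = Greatest (\<lambda>\<sigma>. drc_congruence m D R \<sigma> \<and> projection_separating D \<sigma>)"

end

theory Submission
  imports Defs
begin

locale drcS =
  fixes m :: "'a \<Rightarrow> 'a \<Rightarrow> 'a" and D R :: "'a \<Rightarrow> 'a"
  assumes drc: "drc_semigroup m D R"
begin

lemma assoc: "m (m a b) c = m a (m b c)" using drc unfolding drc_semigroup_def by blast
lemma DA: "m (D a) a = a" using drc unfolding drc_semigroup_def by blast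
lemma RA: "m a (R a) = a" using drc unfolding drc_semigroup_def by blast
lemma DM: "D (m a b) = D (m a (D b))" using drc unfolding drc_semigroup_def by blast
lemma RM: "R (m a b) = R (m (R a) b)" using drc unfolding drc_semigroup_def by blast
lemma DDM: "D (m a b) = m (m (D a) (D (m a b))) (D a)" using drc unfolding drc_semigroup_def by blast
lemma RRM: "R (m a b) = m (m (R b) (R (m a b))) (R b)" using drc unfolding drc_semigroup_def by blast
lemma RD: "R (D a) = D a" using drc unfolding drc_semigroup_def by blast
lemma DR: "D (R a) = R a" using drc unfolding drc_semigroup_def by blast

lemma DD: "D (D a) = D a" by (metis DR RD)
lemma RR: "R (R a) = R a" by (metis DR RD)

lemma projD: "p \<in> range D \<Longrightarrow> D p = p" using DD by auto
lemma projR: "p \<in> range D \<Longrightarrow> R p = p" using RD by auto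
lemma Rproj: "R x \<in> range D" by (metis DR rangeI)

lemma idem: "p \<in> range D \<Longrightarrow> m p p = p" by (metis DA projD)

lemma sandwich: assumes "q \<in> range D" "e = m (m q e) q" shows "proj_le m e q"
proof -
  have qq: "m q q = q" using idem assms(1) .
  have "m e q = e" by (metis assms(2) assoc qq)
  moreover have "m q e = e" by (metis assms(2) assoc qq)
  ultimately show ?thesis unfolding proj_le_def by simp
qed

lemma Dle: "proj_le m (D (m x y)) (D x)"
  by (rule sandwich) (auto intro: DDM)
lemma Rle: "proj_le m (R (m x y)) (R y)"
  by (rule sandwich) (auto intro: RRM Rproj)

lemma antisym_le: "proj_le m p q \<Longrightarrow> proj_le m q p \<Longrightarrow> p = q"
  unfolding proj_le_def by metis

definition T where "T = {(a, b). \<forall>p\<in>range D. R (m p a) = R (m p b) \<and> D (m a p) = D (m b p)}"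

lemma T_eq: "{(a, b). Theta_map m D R a = Theta_map m D R b \<and> Delta_map m D R a = Delta_map m D R b} = T"
  unfolding T_def Theta_map_def Delta_map_def projections_def
  by (auto simp: fun_eq_iff split: if_splits)

lemma T_app0: "(a, b) \<in> T \<Longrightarrow> R (m (D x) a) = R (m (D x) b) \<and> D (m a (D x)) = D (m b (D x))"
  unfolding T_def by auto

lemma T_app: "(a, b) \<in> T \<Longrightarrow> p \<in> range D \<Longrightarrow> R (m p a) = R (m p b) \<and> D (m a p) = D (m b p)"
  using T_app0 by blast

lemma T_DR: assumes "(a, b) \<in> T" shows "D a = D b" "R a = R b"
proof -
  have "D b = D (m b (R b))" using RA by simp
  also have "... = D (m a (R b))" using T_app[OF assms Rproj[of b]] by simp
  finally have 1: "proj_le m (D b) (D a)" using Dle by simp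
  have "D a = D (m a (R a))" using RA by simp
  also have "... = D (m b (R a))" using T_app[OF assms Rproj[of a]] by simp
  finally have 2: "proj_le m (D a) (D b)" using Dle by simp
  from 1 2 show "D a = D b" by (rule antisym_le[rotated])
  have "R b = R (m (D b) b)" using DA by simp
  also have "... = R (m (D b) a)" using T_app[OF assms rangeI[of D b]] by simp
  finally have 3: "proj_le m (R b) (R a)" using Rle by simp
  have "R a = R (m (D a) a)" using DA by simp
  also have "... = R (m (D a) b)" using T_app[OF assms rangeI[of D a]] by simp
  finally have 4: "proj_le m (R a) (R b)" using Rle by simp
  from 3 4 show "R a = R b" by (rule antisym_le[rotated])
qed

lemma T_cong: "drc_congruence m D R T"
  unfolding drc_congruence_def
proof (intro conjI allI impI)
  show "equiv UNIV T" unfolding equiv_def refl_on_def sym_def trans_def T_def by auto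
next
  fix a b c assume ab: "(a, b) \<in> T"
  have "R (m (D p) (m c a)) = R (m (D p) (m c b)) \<and> D (m (m c a) (D p)) = D (m (m c b) (D p))" for p
  proof
    have "R (m (D p) (m c a)) = R (m (R (m (D p) c)) a)" unfolding assoc[symmetric] by (rule RM)
    also have "... = R (m (R (m (D p) c)) b)" using T_app[OF ab Rproj] by simp
    also have "... = R (m (D p) (m c b))" unfolding assoc[symmetric] by (rule RM[symmetric])
    finally show "R (m (D p) (m c a)) = R (m (D p) (m c b))" .
    have "D (m (m c a) (D p)) = D (m c (D (m a (D p))))" unfolding assoc by (rule DM)
    also have "... = D (m c (D (m b (D p))))" using T_app0[OF ab] by simp
    also have "... = D (m (m c b) (D p))" unfolding assoc by (rule DM[symmetric])
    finally show "D (m (m c a) (D p)) = D (m (m c b) (D p))" .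
  qed
  then show "(m c a, m c b) \<in> T" unfolding T_def by auto
  have "R (m (D p) (m a c)) = R (m (D p) (m b c)) \<and> D (m (m a c) (D p)) = D (m (m b c) (D p))" for p
  proof
    have "R (m (D p) (m a c)) = R (m (R (m (D p) a)) c)" unfolding assoc[symmetric] by (rule RM)
    also have "... = R (m (R (m (D p) b)) c)" using T_app0[OF ab] by simp
    also have "... = R (m (D p) (m b c))" unfolding assoc[symmetric] by (rule RM[symmetric])
    finally show "R (m (D p) (m a c)) = R (m (D p) (m b c))" .
    have "D (m (m a c) (D p)) = D (m a (D (m c (D p))))" unfolding assoc by (rule DM)
    also have "... = D (m b (D (m c (D p))))" using T_app[OF ab rangeI] by simp
    also have "... = D (m (m b c) (D p))" unfolding assoc by (rule DM[symmetric])
    finally show "D (m (m a c) (D p)) = D (m (m b c) (D p))" .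
  qed
  then show "(m a c, m b c) \<in> T" unfolding T_def by auto
next
  fix a b assume ab: "(a, b) \<in> T"
  show "(D a, D b) \<in> T" "(R a, R b) \<in> T" using T_DR[OF ab] unfolding T_def by auto
qed

lemma T_sep: "projection_separating D T"
  unfolding projection_separating_def projections_def
  by (auto dest: T_DR(1) simp: DD)

lemma T_max: assumes "drc_congruence m D R \<sigma>" "projection_separating D \<sigma>" shows "\<sigma> \<subseteq> T"
proof clarify
  fix a b assume ab: "(a, b) \<in> \<sigma>"
  show "(a, b) \<in> T" unfolding T_def
  proof (clarify, intro conjI)
    fix p
    have "(m (D p) a, m (D p) b) \<in> \<sigma>" "(m a (D p), m b (D p)) \<in> \<sigma>"
      using assms(1) ab unfolding drc_congruence_def by auto
    then have r1: "(R (m (D p) a), R (m (D p) b)) \<in> \<sigma>" and r2: "(D (m a (D p)), D (m b (D p))) \<in> \<sigma>"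
      using assms(1) unfolding drc_congruence_def by auto
    have sep: "\<And>x y. x \<in> range D \<Longrightarrow> y \<in> range D \<Longrightarrow> (x, y) \<in> \<sigma> \<Longrightarrow> x = y"
      using assms(2) unfolding projection_separating_def projections_def by blast
    show "R (m (D p) a) = R (m (D p) b)" by (rule sep[OF Rproj Rproj r1])
    show "D (m a (D p)) = D (m b (D p))" by (rule sep[OF rangeI rangeI r2])
  qed
qed

lemma mu_T: "mu m D R = T"
  unfolding mu_def
  by (rule Greatest_equality) (use T_cong T_sep T_max in auto)

lemma T_vt: "T = {(a, b). vtheta_map m D R a = vtheta_map m D R b \<and> vtheta'_map m D R a = vtheta'_map m D R b}"
proof (intro set_eqI iffI; clarify)
  fix a b assume ab: "(a, b) \<in> T"
  note DR' = T_DR[OF ab]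
  show "vtheta_map m D R a = vtheta_map m D R b \<and> vtheta'_map m D R a = vtheta'_map m D R b"
    using ab DR' unfolding T_def vtheta_map_def vtheta'_map_def projections_def
    by (auto simp: fun_eq_iff)
next
  fix a b assume h1: "vtheta_map m D R a = vtheta_map m D R b" and h2: "vtheta'_map m D R a = vtheta'_map m D R b"
  have le_refl: "proj_le m q q" if "q \<in> range D" for q using idem[OF that] unfolding proj_le_def by simp
  have dom1: "p \<in> range D \<and> proj_le m p (D a) \<longleftrightarrow> p \<in> range D \<and> proj_le m p (D b)" for p
    using fun_cong[OF h1, of p] unfolding vtheta_map_def projections_def by (auto split: if_splits)
  have dom2: "p \<in> range D \<and> proj_le m p (R a) \<longleftrightarrow> p \<in> range D \<and> proj_le m p (R b)" for p
    using fun_cong[OF h2, of p] unfolding vtheta'_map_def projections_def by (auto split: if_splits)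
  have eD: "D a = D b" using dom1[of "D a"] dom1[of "D b"] le_refl antisym_le by blast
  have eR: "R a = R b" using dom2[of "R a"] dom2[of "R b"] le_refl antisym_le Rproj by blast
  have v1: "R (m q a) = R (m q b)" if "q \<in> range D" "proj_le m q (D a)" for q
    using fun_cong[OF h1, of q] that dom1[of q] unfolding vtheta_map_def projections_def by auto
  have v2: "D (m a q) = D (m b q)" if "q \<in> range D" "proj_le m q (R a)" for q
    using fun_cong[OF h2, of q] that dom2[of q] unfolding vtheta'_map_def projections_def by auto
  show "(a, b) \<in> T" unfolding T_def
  proof (clarify, intro conjI)
    fix p
    let ?q = "R (m (D p) (D a))"
    have "R (m (D p) a) = R (m (D p) (m (D a) a))" using DA by simp
    also have "... = R (m ?q a)" unfolding assoc[symmetric] by (rule RM)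
    also have "... = R (m ?q b)" by (rule v1[OF Rproj]) (use Rle[of "D p" "D a"] RD in simp)
    also have "... = R (m (D p) (m (D b) b))" unfolding eD assoc[symmetric] by (rule RM[symmetric])
    also have "... = R (m (D p) b)" using DA by simp
    finally show "R (m (D p) a) = R (m (D p) b)" .
    let ?r = "D (m (R a) (D p))"
    have "D (m a (D p)) = D (m (m a (R a)) (D p))" using RA by simp
    also have "... = D (m a ?r)" unfolding assoc by (rule DM)
    also have "... = D (m b ?r)" by (rule v2[OF rangeI]) (use Dle[of "R a" "D p"] DR in simp)
    also have "... = D (m (m b (R b)) (D p))" unfolding eR assoc by (rule DM[symmetric])
    also have "... = D (m b (D p))" using RA by simp
    finally show "D (m a (D p)) = D (m b (D p))" .
  qed
qed

end

theorem proposition8p17: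
  fixes m :: "'a \<Rightarrow> 'a \<Rightarrow> 'a" and D R :: "'a \<Rightarrow> 'a"
  assumes "drc_semigroup m D R"
  shows "mu m D R = {(a, b). Theta_map m D R a = Theta_map m D R b \<and> Delta_map m D R a = Delta_map m D R b}
       \<and> {(a, b). Theta_map m D R a = Theta_map m D R b \<and> Delta_map m D R a = Delta_map m D R b}
         = {(a, b). vtheta_map m D R a = vtheta_map m D R b \<and> vtheta'_map m D R a = vtheta'_map m D R b}"
proof -
  interpret drcS m D R using assms by (rule drcS.intro)
  show ?thesis using mu_T T_eq T_vt by simp
qed

end
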